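(* Let $L\ge 1$ and $n_1,\dots,n_L\ge 1$ be integers, $N=\sum_l n_l$, and write vectors in $\mathbb{R}^N$ in blocks $x=[x_1^\top,\dots,x_L^\top]^\top$, $x_l\in\mathbb{R}^{n_l}$. Let $g,v\in\mathbb{R}^N$ and $d\in\mathbb{R}^N$ with positive entries, $D=\mathrm{Diag}(d)$, and set $w_l=v_l-g_l\oslash d_l$. Assume each $w_l$ has at least one positive and at least one negative entry. Consider $$\min_{u,\alpha,\beta}\; g^\top(u-v)+\tfrac12(u-v)^\top D(u-v)\quad\text{s.t.}\quad u_l\in\{-\beta_l,0,\alpha_l\}^{n_l},\ \alpha_l>0,\ \beta_l>0,\ l=1,\dots,L.$$ If $(u,\alpha,\beta)$ is a minimizer, then for every $l$, $$u_l=\alpha_l p_l+\beta_l q_l,\qquad p_l=I^+_{\alpha_l/2}(w_l),\quad q_l=I^-_{\beta_l/2}(w_l),$$ $$\alpha_l=\frac{\|p_l\odot d_l\odot w_l\|_1}{\|p_l\odot d_l\|_1},\qquad \beta_l=\frac{\|q_l\odot d_l\odot w_l\|_1}{\|q_l\odot d_l\|_1}.$$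
   Context: $\odot$ and $\oslash$ are element-wise multiplication and division; $\mathrm{Diag}(x)$ is the diagonal matrix with diagonal $x$. For a threshold $\Delta$: $[I^+_\Delta(x)]_i=1$ if $x_i>\Delta$ and $0$ otherwise; $[I^-_\Delta(x)]_i=-1$ if $x_i<-\Delta$ and $0$ otherwise. *)

theory Defs
  imports Complex_Main
begin

text \<open>Block vectors: a vector x in R^N with blocks x_1,...,x_L, x_l in R^(n_l), is
  represented as x :: nat => nat => real, where x l i is the i-th entry (i < n l)
  of block l (l < L). Entries outside these ranges are irrelevant.\<close>

definition Iplus :: "real \<Rightarrow> (nat \<Rightarrow> real) \<Rightarrow> nat \<Rightarrow> real" where
  "Iplus \<Delta> x i = (if x i > \<Delta> then 1 else 0)"

definition Iminus :: "real \<Rightarrow> (nat \<Rightarrow> real) \<Rightarrow> nat \<Rightarrow> real" where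
  "Iminus \<Delta> x i = (if x i < - \<Delta> then -1 else 0)"

definition norm1 :: "nat \<Rightarrow> (nat \<Rightarrow> real) \<Rightarrow> real" where
  "norm1 m x = (\<Sum>i<m. \<bar>x i\<bar>)"

definition objective :: "nat \<Rightarrow> (nat \<Rightarrow> nat) \<Rightarrow> (nat \<Rightarrow> nat \<Rightarrow> real) \<Rightarrow> (nat \<Rightarrow> nat \<Rightarrow> real)
    \<Rightarrow> (nat \<Rightarrow> nat \<Rightarrow> real) \<Rightarrow> (nat \<Rightarrow> nat \<Rightarrow> real) \<Rightarrow> real" where
  "objective L n g v d u =
     (\<Sum>l<L. \<Sum>i<n l. g l i * (u l i - v l i) + (1/2) * d l i * (u l i - v l i)^2)"

definition feasible :: "nat \<Rightarrow> (nat \<Rightarrow> nat) \<Rightarrow> (nat \<Rightarrow> nat \<Rightarrow> real) \<Rightarrow> (nat \<Rightarrow> real)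
    \<Rightarrow> (nat \<Rightarrow> real) \<Rightarrow> bool" where
  "feasible L n u \<alpha> \<beta> \<longleftrightarrow>
     (\<forall>l<L. \<alpha> l > 0 \<and> \<beta> l > 0 \<and> (\<forall>i<n l. u l i \<in> {- \<beta> l, 0, \<alpha> l}))"

definition is_minimizer :: "nat \<Rightarrow> (nat \<Rightarrow> nat) \<Rightarrow> (nat \<Rightarrow> nat \<Rightarrow> real) \<Rightarrow> (nat \<Rightarrow> nat \<Rightarrow> real)
    \<Rightarrow> (nat \<Rightarrow> nat \<Rightarrow> real) \<Rightarrow> (nat \<Rightarrow> nat \<Rightarrow> real) \<Rightarrow> (nat \<Rightarrow> real) \<Rightarrow> (nat \<Rightarrow> real) \<Rightarrow> bool" where
  "is_minimizer L n g v d u \<alpha> \<beta> \<longleftrightarrow>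
     feasible L n u \<alpha> \<beta> \<and>
     (\<forall>u' \<alpha>' \<beta>'. feasible L n u' \<alpha>' \<beta>' \<longrightarrow> objective L n g v d u \<le> objective L n g v d u')"

end

theory Submission imports Defs begin

definition Jc :: "nat \<Rightarrow> (nat \<Rightarrow> real) \<Rightarrow> (nat \<Rightarrow> real) \<Rightarrow> (nat \<Rightarrow> real) \<Rightarrow> real" where
  "Jc n d w x = (\<Sum>i<n. d i * (x i - w i)^2)"

lemma Jc_upd:
  assumes "i < n"
  shows "Jc n d w (x(i := c)) = Jc n d w x - d i * (x i - w i)^2 + d i * (c - w i)^2"
proof -
  have "Jc n d w (x(i := c)) = d i * (c - w i)^2 + (\<Sum>j\<in>{..<n} - {i}. d j * ((x(i:=c)) j - w j)^2)"
    unfolding Jc_def using assms by (subst sum.remove[of _ i]) auto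
  moreover have "Jc n d w x = d i * (x i - w i)^2 + (\<Sum>j\<in>{..<n} - {i}. d j * (x j - w j)^2)"
    unfolding Jc_def using assms by (subst sum.remove[of _ i]) auto
  moreover have "(\<Sum>j\<in>{..<n} - {i}. d j * ((x(i:=c)) j - w j)^2) = (\<Sum>j\<in>{..<n} - {i}. d j * (x j - w j)^2)"
    by (rule sum.cong) auto
  ultimately show ?thesis by simp
qed

lemma Jc_repl:
  fixes a t :: real and n :: nat and u d w :: "nat \<Rightarrow> real"
  defines "S \<equiv> {j\<in>{..<n}. u j = a}"
  shows "Jc n d w (\<lambda>j. if j \<in> S then t else u j) - Jc n d w u
       = (t - a) * ((\<Sum>j\<in>S. d j) * (t + a) - 2 * (\<Sum>j\<in>S. d j * w j))"
proof -
  have "Jc n d w (\<lambda>j. if j \<in> S then t else u j) - Jc n d w u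
     = (\<Sum>j<n. (if u j = a then d j * ((t - w j)^2 - (a - w j)^2) else 0))"
    unfolding Jc_def S_def by (subst sum_subtractf[symmetric]) (rule sum.cong, auto simp: algebra_simps)
  also have "\<dots> = (\<Sum>j\<in>S. d j * ((t - w j)^2 - (a - w j)^2))"
    unfolding S_def by (subst sum.inter_filter) auto
  also have "\<dots> = (\<Sum>j\<in>S. (t - a) * (d j * (t + a) - 2 * (d j * w j)))"
    by (rule sum.cong) (auto simp: power2_eq_square algebra_simps)
  also have "\<dots> = (t - a) * ((\<Sum>j\<in>S. d j) * (t + a) - 2 * (\<Sum>j\<in>S. d j * w j))"
    by (simp add: sum_distrib_left[symmetric] sum_distrib_right sum_subtractf)
  finally show ?thesis .
qed

lemma core:
  fixes n :: nat and d w u :: "nat \<Rightarrow> real" and a b :: real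
  assumes dpos: "\<forall>i<n. d i > 0"
    and wp: "\<exists>i<n. w i > 0"
    and a: "a > 0" and b: "b > 0"
    and uf: "\<forall>i<n. u i \<in> {-b, 0, a}"
    and opt: "\<And>x a' b'. a' > 0 \<Longrightarrow> b' > 0 \<Longrightarrow> (\<forall>i<n. x i \<in> {-b', 0, a'}) \<Longrightarrow> Jc n d w u \<le> Jc n d w x"
  shows "(\<forall>i<n. u i = a \<longleftrightarrow> w i > a/2)
     \<and> a * (\<Sum>j\<in>{j\<in>{..<n}. u j = a}. d j) = (\<Sum>j\<in>{j\<in>{..<n}. u j = a}. d j * w j)
     \<and> (\<Sum>j\<in>{j\<in>{..<n}. u j = a}. d j) > 0"
proof -
  define S where "S = {j\<in>{..<n}. u j = a}"
  have fS: "finite S" unfolding S_def by auto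
  have pw: "(u i - w i)^2 \<le> (c - w i)^2" if "i < n" "c \<in> {-b, 0, a}" for i c
  proof -
    have "Jc n d w u \<le> Jc n d w (u(i := c))"
      by (rule opt[OF a b]) (use uf that in auto)
    then have "d i * (u i - w i)^2 \<le> d i * (c - w i)^2" using Jc_upd[OF that(1)] by simp
    then show ?thesis using dpos that by (simp add: mult_le_cancel_left)
  qed
  have Sne: "S \<noteq> {}"
  proof
    assume "S = {}"
    then have nA: "\<forall>j<n. u j \<noteq> a" unfolding S_def by auto
    obtain i where i: "i < n" "w i > 0" using wp by auto
    have "Jc n d w u \<le> Jc n d w (u(i := w i))"
      by (rule opt[OF i(2) b]) (use uf nA in auto)
    then have "d i * (u i - w i)^2 \<le> 0" using Jc_upd[OF i(1)] by simp
    moreover have "u i \<noteq> w i" using uf i b nA by force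
    then have "(u i - w i)^2 > 0" by simp
    ultimately show False using dpos i by (force simp: mult_le_0_iff)
  qed
  have Sw: "w i \<ge> a/2" if "i \<in> S" for i
  proof -
    have "(a - w i)^2 \<le> (0 - w i)^2" using pw[of i 0] that unfolding S_def by auto
    then have "a * a \<le> 2 * a * w i" by (simp add: power2_eq_square algebra_simps)
    then have "a \<le> 2 * w i" using a by (metis mult.assoc mult.commute mult_le_cancel_left_pos)
    then show ?thesis by simp
  qed
  define D where "D = (\<Sum>j\<in>S. d j)"
  define E where "E = (\<Sum>j\<in>S. d j * w j)"
  have Dpos: "D > 0" unfolding D_def using fS Sne dpos by (intro sum_pos) (auto simp: S_def)
  have Epos: "E > 0" unfolding E_def using fS Sne dpos Sw a
    by (intro sum_pos) (auto simp: S_def intro!: mult_pos_pos, fastforce)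
  have repl: "Jc n d w (\<lambda>j. if j \<in> S then t else u j) - Jc n d w u = (t - a) * (D * (t + a) - 2 * E)" for t
    unfolding D_def E_def S_def by (rule Jc_repl)
  have feas: "\<forall>j<n. (\<lambda>j. if j \<in> S then t else u j) j \<in> {-b, 0, t}" for t
    using uf unfolding S_def by auto
  have mean: "a * D = E"
  proof -
    define t where "t = E / D"
    have t: "t > 0" unfolding t_def using Dpos Epos by simp
    have "Jc n d w u \<le> Jc n d w (\<lambda>j. if j \<in> S then t else u j)"
      by (rule opt[OF t b feas])
    then have "0 \<le> (t - a) * (D * (t + a) - 2 * E)" using repl[of t] by simp
    moreover have "E = D * t" unfolding t_def using Dpos by simp
    ultimately have "0 \<le> - D * (t - a)^2" by (simp add: power2_eq_square algebra_simps)
    then have "(t - a)^2 \<le> 0" using Dpos by (simp add: mult_le_0_iff)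
    then have "t = a" by simp
    then show ?thesis unfolding t_def using Dpos by (auto simp: field_simps)
  qed
  have Q: "Jc n d w (\<lambda>j. if j \<in> S then t else u j) - Jc n d w u = D * (t - a)^2" for t
    unfolding repl[of t] mean[symmetric] by (simp add: power2_eq_square algebra_simps)
  have char: "u i = a \<longleftrightarrow> w i > a/2" if i: "i < n" for i
  proof
    assume ua: "u i = a"
    then have iS: "i \<in> S" unfolding S_def using i by auto
    have ge: "w i \<ge> a/2" using Sw iS by auto
    show "w i > a/2"
    proof (rule ccontr)
      assume "\<not> w i > a/2"
      then have we: "w i = a/2" using ge by simp
      define e where "e = d i * a / (2 * D)"
      have e: "e > 0" unfolding e_def using dpos i a Dpos by simp
      define t where "t = a + e"
      have t: "t > 0" unfolding t_def using a e by simp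
      let ?y = "\<lambda>j. if j \<in> S then t else u j"
      have "Jc n d w u \<le> Jc n d w (?y(i := 0))"
        by (rule opt[OF t b]) (use feas[of t] in auto)
      moreover have "Jc n d w (?y(i := 0)) = Jc n d w ?y - d i * (t - w i)^2 + d i * (0 - w i)^2"
        using Jc_upd[OF i, of d w ?y 0] iS by simp
      ultimately have "0 \<le> D * e^2 - d i * (t - w i)^2 + d i * (0 - w i)^2"
        using Q[of t] unfolding t_def by simp
      also have "\<dots> = D * e * e - d i * (a + e) * e" unfolding t_def we
        by (simp add: power2_eq_square algebra_simps)
      also have "D * e = d i * a / 2" unfolding e_def using Dpos by simp
      finally have "0 \<le> e * (d i * a / 2 - d i * (a + e))" by (simp add: algebra_simps)
      moreover have "d i * a > 0" "d i * e > 0" using dpos i a e by auto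
      then have "d i * a / 2 - d i * (a + e) < 0" by (simp add: algebra_simps)
      ultimately show False by (metis mult_pos_neg[OF e] not_le)
    qed
  next
    assume wg: "w i > a/2"
    show "u i = a"
    proof (rule ccontr)
      assume na: "u i \<noteq> a"
      then have iS: "i \<notin> S" unfolding S_def by auto
      have u3: "u i = -b \<or> u i = 0" using uf i na by auto
      have "(u i - w i)^2 \<le> (a - w i)^2" using pw[of i a] i by auto
      moreover have "(u i - w i)^2 \<le> (0 - w i)^2" using pw[of i 0] i by auto
      ultimately have "a * a \<le> 2 * a * w i \<or> True" by simp
      have l1: "w i \<le> a/2"
      proof -
        have "(u i - w i)^2 \<le> (a - w i)^2" using pw[of i a] i by auto
        with u3 have "b * b + 2 * b * w i \<le> a * a - 2 * a * w i \<or> w i * w i \<le> a * a - 2 * a * w i + w i * w i"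
          by (auto simp: power2_eq_square algebra_simps)
        moreover have "w i > a/2 \<Longrightarrow> a * a - 2 * a * w i < 0"
        proof -
          assume "w i > a/2" then have "a * a < a * (2 * w i)" using a by (intro mult_strict_left_mono) auto
          then show ?thesis by (simp add: algebra_simps)
        qed
        moreover have "b * b + 2 * b * w i > 0 \<or> w i \<le> a/2" using b
          by (metis (no_types) add_pos_pos mult_pos_pos not_less half_gt_zero_iff a less_trans mult_2)
        ultimately show ?thesis by (smt (verit))
      qed
      have l2: "u i = -b \<Longrightarrow> w i \<le> -b/2"
      proof -
        assume ub: "u i = -b"
        have "(-b - w i)^2 \<le> (0 - w i)^2" using pw[of i 0] i ub by auto
        then have "b * (b + 2 * w i) \<le> 0" by (simp add: power2_eq_square algebra_simps)
        then have "b + 2 * w i \<le> 0" using b by (simp add: mult_le_0_iff)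
        then show ?thesis by simp
      qed
      have le: "w i \<le> a/2 \<and> (u i = -b \<longrightarrow> w i \<le> -b/2)" using l1 l2 by auto
      have u0: "u i = 0" using u3 le wg b a by auto
      have we: "w i = a/2" using le wg by simp
      define e where "e = d i * a / (2 * (D + d i))"
      have dDp: "D + d i > 0" using Dpos dpos i by (simp add: add_pos_pos)
      have e: "e > 0" unfolding e_def using dpos i a dDp by simp
      have De: "(D + d i) * e = d i * a / 2" unfolding e_def using dDp by (simp add: field_simps)
      have ea: "e < a"
      proof -
        have "d i * a > 0" "D * a > 0" using dpos i a Dpos by auto
        then have "d i * a / 2 < (D + d i) * a" by (simp add: algebra_simps)
        then have "(D + d i) * e < (D + d i) * a" using De by simp
        then show ?thesis using dDp by simp
      qed
      define t where "t = a - e"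
      have t: "t > 0" unfolding t_def using ea by simp
      let ?y = "\<lambda>j. if j \<in> S then t else u j"
      have "Jc n d w u \<le> Jc n d w (?y(i := t))"
        by (rule opt[OF t b]) (use feas[of t] in auto)
      moreover have "Jc n d w (?y(i := t)) = Jc n d w ?y - d i * (0 - w i)^2 + d i * (t - w i)^2"
        using Jc_upd[OF i, of d w ?y t] iS u0 by simp
      ultimately have "0 \<le> D * e^2 - d i * (0 - w i)^2 + d i * (t - w i)^2"
        using Q[of t] unfolding t_def by (simp add: power2_eq_square algebra_simps)
      also have "\<dots> = (D + d i) * e * e - d i * a * e" unfolding t_def we
        by (simp add: power2_eq_square algebra_simps)
      also have "\<dots> = e * (d i * a / 2 - d i * a)" proof - have "(D + d i) * e * e = (d i * a / 2) * e" using De by simp then show ?thesis by (simp add: algebra_simps) qed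
      finally have "0 \<le> e * (d i * a / 2 - d i * a)" .
      moreover have "d i * a > 0" using dpos i a by auto
      then have "d i * a / 2 - d i * a < 0" by (simp add: mult.commute)
      ultimately show False by (metis mult_pos_neg[OF e] not_le)
    qed
  qed
  show ?thesis using char mean Dpos unfolding D_def E_def S_def by auto
qed

lemma Jc_neg: "Jc n d (\<lambda>i. - w i) (\<lambda>i. - x i) = Jc n d w x"
  unfolding Jc_def by (rule sum.cong) (auto simp: power2_eq_square algebra_simps)

lemma core2:
  fixes n :: nat and d w u :: "nat \<Rightarrow> real" and a b :: real
  assumes dpos: "\<forall>i<n. d i > 0"
    and wp: "\<exists>i<n. w i > 0" and wn: "\<exists>i<n. w i < 0"
    and a: "a > 0" and b: "b > 0"
    and uf: "\<forall>i<n. u i \<in> {-b, 0, a}"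
    and opt: "\<And>x a' b'. a' > 0 \<Longrightarrow> b' > 0 \<Longrightarrow> (\<forall>i<n. x i \<in> {-b', 0, a'}) \<Longrightarrow> Jc n d w u \<le> Jc n d w x"
  shows "let p = Iplus (a / 2) w; q = Iminus (b / 2) w in
        (\<forall>i<n. u i = a * p i + b * q i)
      \<and> a = norm1 n (\<lambda>i. p i * d i * w i) / norm1 n (\<lambda>i. p i * d i)
      \<and> b = norm1 n (\<lambda>i. q i * d i * w i) / norm1 n (\<lambda>i. q i * d i)"
proof -
  have A: "(\<forall>i<n. u i = a \<longleftrightarrow> w i > a/2)
     \<and> a * (\<Sum>j\<in>{j\<in>{..<n}. u j = a}. d j) = (\<Sum>j\<in>{j\<in>{..<n}. u j = a}. d j * w j)
     \<and> (\<Sum>j\<in>{j\<in>{..<n}. u j = a}. d j) > 0"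
    by (rule core[OF dpos wp a b uf opt])
  have B: "(\<forall>i<n. - u i = b \<longleftrightarrow> - w i > b/2)
     \<and> b * (\<Sum>j\<in>{j\<in>{..<n}. - u j = b}. d j) = (\<Sum>j\<in>{j\<in>{..<n}. - u j = b}. d j * - w j)
     \<and> (\<Sum>j\<in>{j\<in>{..<n}. - u j = b}. d j) > 0"
  proof (rule core[OF dpos _ b a])
    show "\<exists>i<n. - w i > 0" using wn by auto
    show "\<forall>i<n. - u i \<in> {-a, 0, b}" using uf by auto
    fix a' b' :: real and x :: "nat \<Rightarrow> real"
    assume h: "a' > 0" "b' > 0" "\<forall>i<n. x i \<in> {-b', 0, a'}"
    have "Jc n d w u \<le> Jc n d w (\<lambda>i. - x i)"
      by (rule opt[OF h(2) h(1)]) (use h(3) in auto)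
    then show "Jc n d (\<lambda>i. - w i) (\<lambda>i. - u i) \<le> Jc n d (\<lambda>i. - w i) x"
      using Jc_neg[of n d w u] Jc_neg[of n d w "\<lambda>i. - x i"] by simp
  qed
  define P where "P = {j\<in>{..<n}. w j > a/2}"
  define Q where "Q = {j\<in>{..<n}. w j < -(b/2)}"
  have SP: "{j\<in>{..<n}. u j = a} = P" unfolding P_def using A by auto
  have SQ: "{j\<in>{..<n}. - u j = b} = Q" unfolding Q_def using B by force
  have DP: "(\<Sum>j\<in>P. d j) > 0" and EP: "a * (\<Sum>j\<in>P. d j) = (\<Sum>j\<in>P. d j * w j)"
    using A SP by auto
  have DQ: "(\<Sum>j\<in>Q. d j) > 0" and EQ: "b * (\<Sum>j\<in>Q. d j) = (\<Sum>j\<in>Q. d j * - w j)"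
    using B SQ by auto
  define p where "p = Iplus (a / 2) w"
  define q where "q = Iminus (b / 2) w"
  have ab1: "\<bar>d x\<bar> * \<bar>w x\<bar> = d x * w x" if "x < n" "a < w x * 2" for x
  proof -
    have "w x > 0" using that a by linarith
    moreover have "d x > 0" using dpos that by auto
    ultimately show ?thesis by simp
  qed
  have ab2: "d x * \<bar>w x\<bar> = - (d x * w x)" if "x < n" "w x < - (b/2)" for x
  proof -
    have "w x < 0" using that b by linarith
    moreover have "d x > 0" using dpos that by auto
    ultimately show ?thesis by simp
  qed
  have n1: "norm1 n (\<lambda>i. p i * d i * w i) = (\<Sum>j\<in>P. d j * w j)"
    unfolding norm1_def P_def p_def Iplus_def
    by (subst sum.inter_filter) (auto intro!: sum.cong simp: abs_mult dpos a ab1)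
  have n2: "norm1 n (\<lambda>i. p i * d i) = (\<Sum>j\<in>P. d j)"
    unfolding norm1_def P_def p_def Iplus_def
    by (subst sum.inter_filter) (auto intro!: sum.cong simp: dpos less_imp_le)
  have n3: "norm1 n (\<lambda>i. q i * d i * w i) = (\<Sum>j\<in>Q. d j * - w j)"
    unfolding norm1_def Q_def q_def Iminus_def
    by (subst sum.inter_filter) (auto intro!: sum.cong simp: abs_mult dpos b less_imp_le ab2)
  have n4: "norm1 n (\<lambda>i. q i * d i) = (\<Sum>j\<in>Q. d j)"
    unfolding norm1_def Q_def q_def Iminus_def
    by (subst sum.inter_filter) (auto intro!: sum.cong simp: dpos less_imp_le)
  have ueq: "u i = a * p i + b * q i" if i: "i < n" for i
  proof -
    have "u i = a \<longleftrightarrow> w i > a/2" using A i by auto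
    moreover have "u i = -b \<longleftrightarrow> w i < -(b/2)" using B i by force
    moreover have "u i \<in> {-b, 0, a}" using uf i by auto
    ultimately show ?thesis unfolding p_def q_def Iplus_def Iminus_def using a b by auto
  qed
  show ?thesis unfolding Let_def p_def[symmetric] q_def[symmetric]
    using ueq n1 n2 n3 n4 DP EP DQ EQ by (auto simp: field_simps)
qed

lemma term_eq:
  fixes dd gg vv ww y :: real
  assumes "dd > 0" "ww = vv - gg / dd"
  shows "gg * (y - vv) + (1/2) * dd * (y - vv)^2 = (1/2) * (dd * (y - ww)^2) - (1/2) * dd * (vv - ww)^2"
proof -
  have e: "gg = dd * (vv - ww)" using assms by (simp add: field_simps)
  show ?thesis unfolding e by (simp add: power2_eq_square algebra_simps)
qed

lemma block_eq:
  assumes "l < L" "\<forall>l<L. \<forall>i<n l. d l i > 0" "\<forall>l<L. \<forall>i<n l. w l i = v l i - g l i / d l i"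
  shows "(\<Sum>i<n l. g l i * (y i - v l i) + (1/2) * d l i * (y i - v l i)^2)
     = (1/2) * Jc (n l) (d l) (w l) y - (\<Sum>i<n l. (1/2) * d l i * (v l i - w l i)^2)"
  unfolding Jc_def sum_distrib_left sum_subtractf[symmetric]
  by (rule sum.cong[OF refl], rule term_eq) (use assms in auto)

theorem proposition4:
  fixes L :: nat and n :: "nat \<Rightarrow> nat"
    and g v d u :: "nat \<Rightarrow> nat \<Rightarrow> real" and \<alpha> \<beta> :: "nat \<Rightarrow> real"
    and w :: "nat \<Rightarrow> nat \<Rightarrow> real"
  assumes L_pos: "L \<ge> 1"
    and n_pos: "\<forall>l<L. n l \<ge> 1"
    and d_pos: "\<forall>l<L. \<forall>i<n l. d l i > 0"
    and w_def: "\<forall>l<L. \<forall>i<n l. w l i = v l i - g l i / d l i"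
    and w_pos: "\<forall>l<L. \<exists>i<n l. w l i > 0"
    and w_neg: "\<forall>l<L. \<exists>i<n l. w l i < 0"
    and min: "is_minimizer L n g v d u \<alpha> \<beta>"
  shows "\<forall>l<L.
     (let p = Iplus (\<alpha> l / 2) (w l); q = Iminus (\<beta> l / 2) (w l) in
        (\<forall>i<n l. u l i = \<alpha> l * p i + \<beta> l * q i)
      \<and> \<alpha> l = norm1 (n l) (\<lambda>i. p i * d l i * w l i) / norm1 (n l) (\<lambda>i. p i * d l i)
      \<and> \<beta> l = norm1 (n l) (\<lambda>i. q i * d l i * w l i) / norm1 (n l) (\<lambda>i. q i * d l i))"
proof (intro allI impI)
  fix l assume l: "l < L"
  have feas: "feasible L n u \<alpha> \<beta>" and opt0: "\<And>u' \<alpha>' \<beta>'. feasible L n u' \<alpha>' \<beta>' \<Longrightarrow>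
      objective L n g v d u \<le> objective L n g v d u'"
    using min unfolding is_minimizer_def by auto
  define B where "B k y = (\<Sum>i<n k. g k i * (y i - v k i) + (1/2) * d k i * (y i - v k i)^2)" for k y
  have obj: "objective L n g v d x = B l (x l) + (\<Sum>k\<in>{..<L} - {l}. B k (x k))" for x
    unfolding objective_def B_def using l by (subst sum.remove[of _ l]) auto
  show "let p = Iplus (\<alpha> l / 2) (w l); q = Iminus (\<beta> l / 2) (w l) in
        (\<forall>i<n l. u l i = \<alpha> l * p i + \<beta> l * q i)
      \<and> \<alpha> l = norm1 (n l) (\<lambda>i. p i * d l i * w l i) / norm1 (n l) (\<lambda>i. p i * d l i)
      \<and> \<beta> l = norm1 (n l) (\<lambda>i. q i * d l i * w l i) / norm1 (n l) (\<lambda>i. q i * d l i)"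
  proof (rule core2)
    show "\<forall>i<n l. d l i > 0" using d_pos l by auto
    show "\<exists>i<n l. w l i > 0" using w_pos l by auto
    show "\<exists>i<n l. w l i < 0" using w_neg l by auto
    show "\<alpha> l > 0" "\<beta> l > 0" "\<forall>i<n l. u l i \<in> {- \<beta> l, 0, \<alpha> l}"
      using feas l unfolding feasible_def by auto
    fix x :: "nat \<Rightarrow> real" and a' b' :: real
    assume h: "a' > 0" "b' > 0" "\<forall>i<n l. x i \<in> {-b', 0, a'}"
    have "feasible L n (u(l := x)) (\<alpha>(l := a')) (\<beta>(l := b'))"
      using feas h unfolding feasible_def by auto
    then have "objective L n g v d u \<le> objective L n g v d (u(l := x))" by (rule opt0)
    moreover have "(\<Sum>k\<in>{..<L} - {l}. B k ((u(l := x)) k)) = (\<Sum>k\<in>{..<L} - {l}. B k (u k))"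
      by (rule sum.cong) auto
    ultimately have "B l (u l) \<le> B l x" using obj[of u] obj[of "u(l := x)"] by simp
    then show "Jc (n l) (d l) (w l) (u l) \<le> Jc (n l) (d l) (w l) x"
      unfolding B_def block_eq[OF l d_pos w_def] by simp
  qed
qed

end
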